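(* Let $K\subseteq\mathbb{R}^p$ be compact, $S_0$ a set of covariate values, $\sigma>0$, and $r$ such that for every $x$, $\beta\mapsto r(x,\beta)$ is a polynomial of degree at most $\zeta$ (an integer $\ge1$); assume $\mathfrak{L}_{S_0}:=\sup_{x\in S_0}\mathfrak{L}(x)\in(0,\infty)$. Let $G$ be a probability measure supported on $K$. Then for every $a\ge1$ there exists a discrete probability measure $G'$ supported on at most $$(2\lfloor 13.5a^2\rfloor\zeta+1)^p\,N(a\sigma/\mathfrak{L}_{S_0},K)+1$$ points of $K$ such that $$\sup_{(x,y)\in S_0\times\mathbb{R}}|f^G_x(y)-f^{G'}_x(y)|\le\Big(1+\frac{1}{\sqrt{2\pi}}\Big)\frac{e^{-a^2/2}}{(2\pi)^{1/2}\sigma}.$$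
   Context: $\phi$ is the standard normal density; $f^G_x(y):=\int\frac1\sigma\phi\big(\frac{y-r(x,\beta)}{\sigma}\big)\,dG(\beta)$. $\mathfrak{L}(x):=\sup_{\beta_1,\beta_2\in K,\beta_1\ne\beta_2}\frac{|r(x,\beta_1)-r(x,\beta_2)|}{\|\beta_1-\beta_2\|}$. $N(\epsilon,K)$ is the $\epsilon$-covering number of $K$ in the Euclidean metric: the smallest cardinality of a set $S$ with $\sup_{t\in K}\inf_{s\in S}\|s-t\|\le\epsilon$. *)

theory Defs
  imports "HOL-Probability.Probability"
begin

definition mix_density ::
  "('x \<Rightarrow> 'b \<Rightarrow> real) \<Rightarrow> real \<Rightarrow> 'b measure \<Rightarrow> 'x \<Rightarrow> real \<Rightarrow> real" where
  "mix_density r \<sigma> G x y =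
     (\<integral>\<beta>. (1 / \<sigma>) * std_normal_density ((y - r x \<beta>) / \<sigma>) \<partial>G)"

definition poly_deg_le :: "nat \<Rightarrow> (real ^ 'p \<Rightarrow> real) \<Rightarrow> bool" where
  "poly_deg_le d f \<longleftrightarrow>
     (\<exists>A :: ('p \<Rightarrow> nat) set. \<exists>c :: ('p \<Rightarrow> nat) \<Rightarrow> real.
        finite A \<and> (\<forall>\<alpha>\<in>A. (\<Sum>i\<in>UNIV. \<alpha> i) \<le> d) \<and>
        (\<forall>\<beta>. f \<beta> = (\<Sum>\<alpha>\<in>A. c \<alpha> * (\<Prod>i\<in>UNIV. (\<beta> $ i) ^ (\<alpha> i)))))"

text \<open>Lipschitz constant L(x) on K (in ereal, so that an infinite supremum is +infinity).\<close>
definition lipK :: "('x \<Rightarrow> 'b::real_normed_vector \<Rightarrow> real) \<Rightarrow> 'b set \<Rightarrow> 'x \<Rightarrow> ereal" where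
  "lipK r K x = (SUP \<beta>\<in>{(b1, b2). b1 \<in> K \<and> b2 \<in> K \<and> b1 \<noteq> b2}.
      ereal (\<bar>r x (fst \<beta>) - r x (snd \<beta>)\<bar> / norm (fst \<beta> - snd \<beta>)))"

definition lipS :: "('x \<Rightarrow> 'b::real_normed_vector \<Rightarrow> real) \<Rightarrow> 'b set \<Rightarrow> 'x set \<Rightarrow> ereal" where
  "lipS r K S0 = (SUP x\<in>S0. lipK r K x)"

definition covering_number :: "real \<Rightarrow> 'b::metric_space set \<Rightarrow> nat" where
  "covering_number \<epsilon> K =
     (LEAST n. \<exists>S. finite S \<and> card S = n \<and> (\<forall>t\<in>K. \<exists>s\<in>S. dist s t \<le> \<epsilon>))"

end

theory Submission
  imports Defs
begin

definition mnm :: "('p \<Rightarrow> nat) \<Rightarrow> real ^ 'p \<Rightarrow> real" where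
  "mnm \<alpha> \<beta> = (\<Prod>i\<in>UNIV. (\<beta> $ i) ^ (\<alpha> i))"

inductive pd :: "nat \<Rightarrow> (real ^ 'p \<Rightarrow> real) \<Rightarrow> bool" for d where
  pd_mono: "sum \<alpha> UNIV \<le> d \<Longrightarrow> pd d (\<lambda>\<beta>. c * mnm \<alpha> \<beta>)"
| pd_add: "pd d f \<Longrightarrow> pd d g \<Longrightarrow> pd d (\<lambda>\<beta>. f \<beta> + g \<beta>)"

lemma pd_const: "pd d (\<lambda>\<beta>. c)"
  using pd_mono[of "\<lambda>_. 0" d c] by (simp add: mnm_def)

lemma pd_le: "pd d f \<Longrightarrow> d \<le> d' \<Longrightarrow> pd d' f"
  by (induction rule: pd.induct) (auto intro: pd.intros)

lemma pd_scale: "pd d f \<Longrightarrow> pd d (\<lambda>\<beta>. c * f \<beta>)"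
proof (induction rule: pd.induct)
  case (pd_mono \<alpha> c')
  then show ?case using pd.pd_mono[of \<alpha> d "c*c'"] by (simp add: mult.assoc)
next
  case (pd_add f g)
  then show ?case using pd.pd_add[OF pd_add.IH] by (simp add: distrib_left)
qed

lemma mnm_add: "mnm (\<lambda>i. \<alpha> i + \<alpha>' i) \<beta> = mnm \<alpha> \<beta> * mnm \<alpha>' \<beta>"
  by (simp add: mnm_def power_add prod.distrib)

lemma pd_mult_mono: "pd d1 f \<Longrightarrow> sum \<alpha> UNIV \<le> d2 \<Longrightarrow> pd (d1 + d2) (\<lambda>\<beta>. f \<beta> * (c * mnm \<alpha> \<beta>))"
proof (induction rule: pd.induct)
  case (pd_mono \<alpha>' c')
  have "sum (\<lambda>i. \<alpha>' i + \<alpha> i) UNIV \<le> d1 + d2" using pd_mono by (simp add: sum.distrib)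
  from pd.pd_mono[OF this, of "c'*c"] show ?case by (simp add: mnm_add mult_ac)
next
  case (pd_add f g)
  then show ?case using pd.pd_add[OF pd_add.IH] by (simp add: distrib_right)
qed



lemma pd_mult: assumes "pd d1 f" "pd d2 g" shows "pd (d1 + d2) (\<lambda>\<beta>. f \<beta> * g \<beta>)"
  using assms(2)
proof (induction rule: pd.induct)
  case (pd_mono \<alpha> c)
  then show ?case using pd_mult_mono[OF assms(1)] by simp
next
  case (pd_add g1 g2)
  then show ?case using pd.pd_add[OF pd_add.IH] by (simp add: distrib_left)
qed

lemma pd_sum: "finite A \<Longrightarrow> (\<And>m. m \<in> A \<Longrightarrow> pd d (f m)) \<Longrightarrow> pd d (\<lambda>\<beta>. \<Sum>m\<in>A. f m \<beta>)"
  by (induction A rule: finite_induct) (auto intro: pd_const pd.pd_add)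

lemma pd_power: "pd d f \<Longrightarrow> pd (m * d) (\<lambda>\<beta>. f \<beta> ^ m)"
proof (induction m)
  case 0
  then show ?case using pd_const[of 0 1] by simp
next
  case (Suc m)
  from pd_mult[OF Suc.prems Suc.IH[OF Suc.prems]] show ?case by (simp add: add.commute)
qed

lemma poly_deg_le_pd: assumes "poly_deg_le d f" shows "pd d f"
proof -
  obtain A c where A: "finite A" "\<forall>\<alpha>\<in>A. (\<Sum>i\<in>UNIV. \<alpha> i) \<le> d"
    "\<forall>\<beta>. f \<beta> = (\<Sum>\<alpha>\<in>A. c \<alpha> * (\<Prod>i\<in>UNIV. (\<beta> $ i) ^ (\<alpha> i)))"
    using assms unfolding poly_deg_le_def by blast
  have "pd d (\<lambda>\<beta>. \<Sum>\<alpha>\<in>A. c \<alpha> * mnm \<alpha> \<beta>)"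
    using A by (intro pd_sum) (auto intro: pd_mono)
  moreover have "f = (\<lambda>\<beta>. \<Sum>\<alpha>\<in>A. c \<alpha> * mnm \<alpha> \<beta>)" using A(3) by (auto simp: mnm_def)
  ultimately show ?thesis by simp
qed

lemma pd_moment:
  assumes "pd d f" "finite Q" "\<And>\<alpha>. sum \<alpha> UNIV \<le> d \<Longrightarrow> (\<Sum>q\<in>Q. w q * mnm \<alpha> (c q)) = 0"
  shows "(\<Sum>q\<in>Q. w q * f (c q)) = 0"
  using assms(1)
proof (induction rule: pd.induct)
  case (pd_mono \<alpha> c')
  have "(\<Sum>q\<in>Q. w q * (c' * mnm \<alpha> (c q))) = c' * (\<Sum>q\<in>Q. w q * mnm \<alpha> (c q))"
    by (simp add: sum_distrib_left mult_ac)
  then show ?case using assms(3)[OF pd_mono] by simp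
next
  case (pd_add f g)
  then show ?case by (simp add: distrib_left sum.distrib)
qed

lemma continuous_mono: "continuous_on S (mnm \<alpha>)"
  unfolding mnm_def by (intro continuous_intros)

lemma pd_continuous: "pd d f \<Longrightarrow> continuous_on S f"
  by (induction rule: pd.induct) (auto intro!: continuous_intros continuous_mono)

lemma lin_dep_aux:
  fixes F :: "('q \<Rightarrow> real) set"
  shows "\<forall>(F::('q \<Rightarrow> real) set) (Q::'q set). finite Q \<longrightarrow> finite F \<longrightarrow> card F \<le> n \<longrightarrow> card F < card Q \<longrightarrow>
     (\<exists>c. (\<exists>q\<in>Q. c q \<noteq> 0) \<and> (\<forall>f\<in>F. (\<Sum>q\<in>Q. c q * f q) = 0))"
proof (induction n)
  case 0
  show ?case
  proof (intro allI impI)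
    fix F :: "('q \<Rightarrow> real) set" and Q :: "'q set"
    assume h: "finite Q" "finite F" "card F \<le> 0" "card F < card Q"
    then have "Q \<noteq> {}" by auto
    then obtain q where "q \<in> Q" by auto
    moreover have "F = {}" using h by auto
    ultimately show "\<exists>c. (\<exists>q\<in>Q. c q \<noteq> 0) \<and> (\<forall>f\<in>F. (\<Sum>q\<in>Q. c q * f q) = 0)"
      by (intro exI[of _ "\<lambda>_. 1"]) auto
  qed
next
  case (Suc n)
  show ?case
  proof (intro allI impI)
    fix F :: "('q \<Rightarrow> real) set" and Q :: "'q set"
    assume h: "finite Q" "finite F" "card F \<le> Suc n" "card F < card Q"
    show "\<exists>c. (\<exists>q\<in>Q. c q \<noteq> 0) \<and> (\<forall>f\<in>F. (\<Sum>q\<in>Q. c q * f q) = 0)"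
    proof (cases "card F \<le> n")
      case True
      then show ?thesis using Suc.IH[rule_format, of Q F] h by blast
    next
      case False
      then have "F \<noteq> {}" by auto
      then obtain f where f: "f \<in> F" by auto
      define F0 where "F0 = F - {f}"
      have cF0: "card F0 \<le> n" using h False f unfolding F0_def by (simp add: card_Diff_singleton)
      have fin0: "finite F0" using h unfolding F0_def by simp
      show ?thesis
      proof (cases "\<forall>q\<in>Q. f q = 0")
        case True
        have "card F0 < card Q" using cF0 h by (simp add: F0_def card_Diff_singleton f)
        then obtain c where c: "\<exists>q\<in>Q. c q \<noteq> 0" "\<forall>g\<in>F0. (\<Sum>q\<in>Q. c q * g q) = 0"
          using Suc.IH[rule_format, of Q F0] h fin0 cF0 by blast
        have "\<forall>g\<in>F. (\<Sum>q\<in>Q. c q * g q) = 0"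
        proof
          fix g assume "g \<in> F"
          show "(\<Sum>q\<in>Q. c q * g q) = 0"
          proof (cases "g = f")
            case True then show ?thesis using \<open>\<forall>q\<in>Q. f q = 0\<close> by simp
          next
            case False then show ?thesis using c \<open>g \<in> F\<close> by (auto simp: F0_def)
          qed
        qed
        then show ?thesis using c by blast
      next
        case False
        then obtain q0 where q0: "q0 \<in> Q" "f q0 \<noteq> 0" by auto
        define Q0 where "Q0 = Q - {q0}"
        define T where "T = (\<lambda>g q. g q - f q / f q0 * g q0)"
        define F1 where "F1 = T ` F0"
        have cF1: "card F1 \<le> n" using cF0 fin0 card_image_le unfolding F1_def by (meson le_trans)
        have cQ0: "card Q0 = card Q - 1" using q0 h unfolding Q0_def by (simp add: card_Diff_singleton)
        have "card F = Suc (card F0)" using f h unfolding F0_def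
          by (metis card_Suc_Diff1)
        then have "card F1 < card Q0" using cF1 cQ0 h cF0 card_image_le[OF fin0, of T]
          unfolding F1_def by linarith
        then obtain c0 where c0: "\<exists>q\<in>Q0. c0 q \<noteq> 0" "\<forall>g\<in>F1. (\<Sum>q\<in>Q0. c0 q * g q) = 0"
          using Suc.IH[rule_format, of Q0 F1] h fin0 cF1 unfolding F1_def Q0_def by auto
        define c where "c = c0(q0 := - (\<Sum>q\<in>Q0. c0 q * f q) / f q0)"
        have finQ0: "finite Q0" using h unfolding Q0_def by simp
        have split: "(\<Sum>q\<in>Q. c q * g q) = (\<Sum>q\<in>Q0. c0 q * g q) + c q0 * g q0" for g
        proof -
          have "(\<Sum>q\<in>Q. c q * g q) = c q0 * g q0 + (\<Sum>q\<in>Q0. c q * g q)"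
            using h q0 unfolding Q0_def by (simp add: sum.remove)
          also have "(\<Sum>q\<in>Q0. c q * g q) = (\<Sum>q\<in>Q0. c0 q * g q)"
            by (rule sum.cong) (auto simp: c_def Q0_def)
          finally show ?thesis by simp
        qed
        have "\<forall>g\<in>F. (\<Sum>q\<in>Q. c q * g q) = 0"
        proof
          fix g assume g: "g \<in> F"
          show "(\<Sum>q\<in>Q. c q * g q) = 0"
          proof (cases "g = f")
            case True
            then show ?thesis using split[of f] q0 by (simp add: c_def)
          next
            case False
            then have "T g \<in> F1" using g unfolding F1_def F0_def by auto
            then have "(\<Sum>q\<in>Q0. c0 q * (g q - f q / f q0 * g q0)) = 0" using c0 unfolding T_def by auto
            moreover have "(\<Sum>q\<in>Q0. c0 q * (g q - f q / f q0 * g q0)) = (\<Sum>q\<in>Q0. c0 q * g q) - (\<Sum>q\<in>Q0. (c0 q * f q) * (g q0 / f q0))"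
              by (simp add: right_diff_distrib sum_subtractf mult_ac)
            moreover have "(\<Sum>q\<in>Q0. (c0 q * f q) * (g q0 / f q0)) = (\<Sum>q\<in>Q0. c0 q * f q) * (g q0 / f q0)"
              by (rule sum_distrib_right[symmetric])
            ultimately have e: "(\<Sum>q\<in>Q0. c0 q * g q) = (\<Sum>q\<in>Q0. c0 q * f q) / f q0 * g q0"
              by simp
            show ?thesis using split[of g] e by (simp add: c_def)
          qed
        qed
        moreover have "\<exists>q\<in>Q. c q \<noteq> 0" using c0 unfolding c_def Q0_def by auto
        ultimately show ?thesis by blast
      qed
    qed
  qed
qed

lemma lin_dep:
  fixes F :: "('q \<Rightarrow> real) set"
  assumes "finite Q" "finite F" "card F < card Q"
  shows "\<exists>c. (\<exists>q\<in>Q. c q \<noteq> 0) \<and> (\<forall>f\<in>F. (\<Sum>q\<in>Q. c q * f q) = 0)"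
  using lin_dep_aux[of "card F"] assms by blast

lemma carath:
  fixes v :: "'q \<Rightarrow> 'i \<Rightarrow> real" and w :: "'q \<Rightarrow> real"
  assumes "finite Q" "finite I" "\<forall>q\<in>Q. w q \<ge> 0" "sum w Q = 1"
  shows "\<exists>Q' u. Q' \<subseteq> Q \<and> card Q' \<le> card I + 1 \<and> (\<forall>q\<in>Q'. u q \<ge> 0) \<and> sum u Q' = 1 \<and>
           (\<forall>i\<in>I. (\<Sum>q\<in>Q'. u q * v q i) = (\<Sum>q\<in>Q. w q * v q i))"
  using assms
proof (induction "card Q" arbitrary: Q w rule: less_induct)
  case less
  show ?case
  proof (cases "card Q \<le> card I + 1")
    case True
    then show ?thesis using less.prems by (intro exI[of _ Q] exI[of _ w]) auto
  next
    case False
    define F where "F = insert (\<lambda>_. 1) ((\<lambda>i q. v q i) ` I)"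
    have "card F \<le> card I + 1" unfolding F_def
      using card_insert_le_m1 card_image_le[OF less.prems(2)]
      by (metis (no_types, lifting) Suc_eq_plus1 card.infinite card_insert_if finite_imageI le_SucI less.prems(2) nat_le_linear not_less_eq_eq)
    then have "card F < card Q" using False by simp
    moreover have "finite F" unfolding F_def using less.prems by simp
    ultimately obtain c where c: "\<exists>q\<in>Q. c q \<noteq> 0" "\<forall>f\<in>F. (\<Sum>q\<in>Q. c q * f q) = 0"
      using lin_dep[of Q F] less.prems by blast
    have csum: "sum c Q = 0" using c(2) unfolding F_def by auto
    have cv: "(\<Sum>q\<in>Q. c q * v q i) = 0" if "i \<in> I" for i
      using c(2) that unfolding F_def by auto
    have "\<exists>q\<in>Q. c q > 0"
    proof (rule ccontr)
      assume "\<not> ?thesis"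
      then have "\<forall>q\<in>Q. c q \<le> 0" by auto
      then have "\<forall>q\<in>Q. - c q = 0" using sum_nonneg_eq_0_iff[OF less.prems(1), of "\<lambda>q. - c q"] csum by (auto simp: sum_negf)
      then show False using c(1) by auto
    qed
    define Pos where "Pos = {q\<in>Q. c q > 0}"
    have finP: "finite Pos" "Pos \<noteq> {}" using less.prems \<open>\<exists>q\<in>Q. c q > 0\<close> unfolding Pos_def by auto
    define m where "m = Min ((\<lambda>q. w q / c q) ` Pos)"
    obtain q1 where q1: "q1 \<in> Pos" "w q1 / c q1 = m"
    proof -
      have "m \<in> (\<lambda>q. w q / c q) ` Pos" unfolding m_def using finP by (intro Min_in) auto
      then show ?thesis using that by auto
    qed
    have mle: "m \<le> w q / c q" if "q \<in> Pos" for q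
      using finP that unfolding m_def by (intro Min_le) auto
    have m0: "m \<ge> 0" using q1 less.prems(3) unfolding Pos_def by auto
    define u where "u = (\<lambda>q. w q - m * c q)"
    have u0: "u q \<ge> 0" if "q \<in> Q" for q
    proof (cases "c q > 0")
      case True
      then have "m \<le> w q / c q" using mle that unfolding Pos_def by auto
      then have "m * c q \<le> w q" using True by (simp add: le_divide_eq)
      then show ?thesis unfolding u_def by simp
    next
      case False
      then have "m * c q \<le> 0" using m0 by (simp add: mult_nonneg_nonpos)
      then show ?thesis unfolding u_def using less.prems(3) that by auto
    qed
    have uq1: "u q1 = 0" using q1 unfolding u_def Pos_def by auto
    have q1Q: "q1 \<in> Q" using q1 unfolding Pos_def by auto
    define Q1 where "Q1 = Q - {q1}"
    have sumQ1: "(\<Sum>q\<in>Q1. u q * g q) = (\<Sum>q\<in>Q. u q * g q)" for g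
      using sum.remove[OF less.prems(1) q1Q, of "\<lambda>q. u q * g q"] uq1 unfolding Q1_def by simp
    have su: "sum u Q = 1" unfolding u_def using csum less.prems(4)
      by (simp add: sum_subtractf sum_distrib_left[symmetric])
    have su1: "sum u Q1 = 1" using sumQ1[of "\<lambda>_. 1"] su by simp
    have uv: "(\<Sum>q\<in>Q. u q * v q i) = (\<Sum>q\<in>Q. w q * v q i)" if "i \<in> I" for i
    proof -
      have "(\<Sum>q\<in>Q. u q * v q i) = (\<Sum>q\<in>Q. w q * v q i) - m * (\<Sum>q\<in>Q. c q * v q i)"
        unfolding u_def sum_distrib_left sum_subtractf[symmetric] by (rule sum.cong) (auto simp: algebra_simps)
      then show ?thesis using cv[OF that] by simp
    qed
    have "card Q1 < card Q" unfolding Q1_def using less.prems(1) q1Q by (meson card_Diff1_less)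
    moreover have "finite Q1" "\<forall>q\<in>Q1. u q \<ge> 0" using less.prems u0 unfolding Q1_def by auto
    ultimately obtain Q' u' where r: "Q' \<subseteq> Q1" "card Q' \<le> card I + 1" "\<forall>q\<in>Q'. u' q \<ge> 0" "sum u' Q' = 1"
      "\<forall>i\<in>I. (\<Sum>q\<in>Q'. u' q * v q i) = (\<Sum>q\<in>Q1. u q * v q i)"
      using less.hyps[of Q1 u] less.prems(2) su1 by blast
    show ?thesis
      using r sumQ1 uv by (intro exI[of _ Q'] exI[of _ u']) (auto simp: Q1_def)
  qed
qed

lemma exp_ge_term: assumes "(x::real) \<ge> 0" shows "x ^ n / fact n \<le> exp x"
proof -
  obtain t where t: "exp x = (\<Sum>m<Suc n. x ^ m / fact m) + exp t / fact (Suc n) * x ^ Suc n"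
    using Maclaurin_exp_le[of x "Suc n"] by blast
  have "x ^ n / fact n \<le> (\<Sum>m<Suc n. x ^ m / fact m)"
    using assms by (intro member_le_sum) auto
  moreover have "0 \<le> exp t / fact (Suc n) * x ^ Suc n" using assms by simp
  ultimately show ?thesis using t by linarith
qed

lemma taylor_negexp:
  assumes "(v::real) \<ge> 0" "n > 0"
  shows "\<bar>exp (- v) - (\<Sum>m<n. (- v) ^ m / fact m)\<bar> \<le> v ^ n / fact n"
proof (cases "v = 0")
  case True
  then show ?thesis using assms by (cases n) (auto simp del: sum.lessThan_Suc simp add: sum.lessThan_Suc_shift)
next
  case False
  then have h: "- v < 0" using assms by simp
  obtain t where t: "- v < t" "t < 0"
    "exp (- v) = (\<Sum>m<n. exp 0 / fact m * (- v) ^ m) + exp t / fact n * (- v) ^ n"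
    using Maclaurin_minus[OF h assms(2), of "\<lambda>_. exp" exp] by (auto intro: DERIV_exp)
  have "\<bar>exp t / fact n * (- v) ^ n\<bar> = exp t * v ^ n / fact n"
    using assms by (simp add: abs_mult power_abs)
  also have "\<dots> \<le> 1 * v ^ n / fact n"
    using t assms by (intro divide_right_mono mult_right_mono) auto
  finally show ?thesis using t(3) by simp
qed

lemma num_bound:
  fixes a :: real
  assumes "a \<ge> 1"
  defines "n \<equiv> Suc (nat \<lfloor>27 / 2 * a\<^sup>2\<rfloor>)"
  shows "2 * ((9 * a\<^sup>2 / 2) ^ n / fact n) \<le> exp (- a\<^sup>2 / 2)"
proof -
  define u where "u = 9 * a\<^sup>2 / 2"
  have a2: "a\<^sup>2 \<ge> 1" using assms by (simp add: one_le_power)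
  have u0: "u > 0" using assms unfolding u_def by simp
  have f0: "\<lfloor>27 / 2 * a\<^sup>2\<rfloor> \<ge> 0" using a2 by simp
  have fe: "real (nat \<lfloor>27 / 2 * a\<^sup>2\<rfloor>) = real_of_int \<lfloor>27 / 2 * a\<^sup>2\<rfloor>" using f0 by simp
  have fl: "real (nat \<lfloor>27 / 2 * a\<^sup>2\<rfloor>) > 27/2 * a\<^sup>2 - 1"
    unfolding fe using floor_correct[of "27 / 2 * a\<^sup>2"] by linarith
  have nu: "real n > 3 * u" using fl unfolding n_def u_def of_nat_Suc by linarith
  have fl13: "\<lfloor>27 / 2 * a\<^sup>2\<rfloor> \<ge> 13" using a2 by linarith
  have n14: "n \<ge> 14" unfolding n_def using fl13 by linarith
  have npos: "real n > 0" using n14 by simp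
  have "u ^ n / fact n = (u / real n) ^ n * (real n ^ n / fact n)"
    using npos by (simp add: power_divide)
  also have "\<dots> \<le> (u / real n) ^ n * exp (real n)"
    using u0 npos by (intro mult_left_mono exp_ge_term) auto
  also have "\<dots> = (exp 1 * u / real n) ^ n"
    by (simp add: power_mult_distrib exp_of_nat_mult[symmetric] mult_ac power_divide)
  also have "\<dots> \<le> (exp 1 / 3) ^ n"
  proof (rule power_mono)
    show "exp 1 * u / real n \<le> exp 1 / 3" using nu npos u0
      by (simp add: divide_simps)
    show "0 \<le> exp 1 * u / real n" using u0 npos by simp
  qed
  finally have A: "u ^ n / fact n \<le> (exp 1 / 3) ^ n" .
  have B: "exp (- real n / 27) \<le> exp (- a\<^sup>2 / 2)"
    using nu unfolding u_def by simp
  have e127: "exp (1/27::real) \<le> 27/26"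
  proof -
    have "1 + (-1/27) \<le> exp (-1/27::real)" by (rule exp_ge_add_one_self)
    then have "26/27 \<le> exp (-1/27::real)" by simp
    moreover have "exp (1/27::real) * exp (-1/27) = 1" by (simp add: exp_add[symmetric])
    ultimately have "exp (1/27::real) * (26/27) \<le> 1"
      by (metis exp_gt_zero less_eq_real_def mult_left_mono)
    then show ?thesis by simp

  qed
  define b :: real where "b = exp 1 / 3 * exp (1/27)"
  have b0: "b \<ge> 0" unfolding b_def by simp
  have bb: "b \<le> (272/100) / 3 * (27/26)" unfolding b_def
    using e_less_272 e127 by (intro mult_mono) auto
  have "b ^ n \<le> b ^ 14"
  proof (rule power_decreasing[OF n14 b0])
    show "b \<le> 1" using bb by simp
  qed
  also have "\<dots> \<le> ((272/100) / 3 * (27/26)) ^ 14" using bb b0 by (intro power_mono) auto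
  also have "\<dots> \<le> 1/2"
  proof -
    have "((272/100) / 3 * (27/26::real)) = 306/325" by simp
    moreover have "(306/325::real)^14 \<le> 1/2" by (simp add: power_divide)
    ultimately show ?thesis by simp
  qed
  finally have bn: "b ^ n \<le> 1/2" .
  have en: "exp (1/27::real) ^ n * exp (- real n / 27) = 1"
    by (simp add: exp_of_nat_mult[symmetric] exp_add[symmetric])
  have "b ^ n * exp (- real n / 27) = (exp 1 / 3) ^ n * (exp (1/27) ^ n * exp (- real n / 27))"
    unfolding b_def power_mult_distrib by (simp only: mult.assoc)
  then have "(exp 1 / 3) ^ n = b ^ n * exp (- real n / 27)" using en by simp
  also have "\<dots> \<le> 1/2 * exp (- real n / 27)" using bn by (intro mult_right_mono) auto
  finally show ?thesis using A B unfolding u_def by linarith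
qed

lemma cell_bound:
  fixes Q :: "'q set" and w u :: "'q \<Rightarrow> real" and c :: "'q \<Rightarrow> real ^ 'p"
    and R :: "real ^ 'p \<Rightarrow> real" and \<sigma> a y :: real and D \<zeta> :: nat
  assumes fin: "finite Q" and w0: "\<forall>q\<in>Q. w q \<ge> 0" and u0: "\<forall>q\<in>Q. u q \<ge> 0"
    and sw: "sum u Q = sum w Q"
    and mom: "\<And>\<alpha>. sum \<alpha> UNIV \<le> D \<Longrightarrow> (\<Sum>q\<in>Q. (w q - u q) * mnm \<alpha> (c q)) = 0"
    and pdR: "pd \<zeta> R" and Dge: "2 * nat \<lfloor>27 / 2 * a\<^sup>2\<rfloor> * \<zeta> \<le> D"
    and close: "\<forall>q1\<in>Q. \<forall>q2\<in>Q. \<bar>R (c q1) - R (c q2)\<bar> \<le> 2 * a * \<sigma>"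
    and \<sigma>: "\<sigma> > 0" and a: "a \<ge> 1"
  shows "\<bar>\<Sum>q\<in>Q. (w q - u q) * ((1 / \<sigma>) * std_normal_density ((y - R (c q)) / \<sigma>))\<bar>
           \<le> sum w Q * (exp (- a\<^sup>2 / 2) / (sqrt (2 * pi) * \<sigma>))"
proof -
  define W where "W = sum w Q"
  define E where "E = exp (- a\<^sup>2 / 2) / (sqrt (2 * pi) * \<sigma>)"
  define t where "t = (\<lambda>q. (y - R (c q)) / \<sigma>)"
  define H where "H = (\<lambda>q. (1 / \<sigma>) * std_normal_density (t q))"
  define C where "C = 1 / (sqrt (2 * pi) * \<sigma>)"
  have C0: "C > 0" using \<sigma> unfolding C_def by simp
  have Hq: "H q = C * exp (- (t q)\<^sup>2 / 2)" for q
    unfolding H_def C_def std_normal_density_def by simp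
  have EC: "E = C * exp (- a\<^sup>2 / 2)" unfolding E_def C_def by simp
  have W0: "W \<ge> 0" unfolding W_def using w0 by (simp add: sum_nonneg)
  have goal: "\<bar>\<Sum>q\<in>Q. (w q - u q) * H q\<bar> \<le> W * E"
  proof (cases "\<forall>q\<in>Q. \<bar>y - R (c q)\<bar> \<ge> a * \<sigma>")
    case True
    have Hb: "0 \<le> H q \<and> H q \<le> E" if "q \<in> Q" for q
    proof -
      have "a * \<sigma> \<le> \<bar>y - R (c q)\<bar>" using True that by auto
      then have "a \<le> \<bar>t q\<bar>" unfolding t_def using \<sigma> by (simp add: abs_divide le_divide_eq)
      then have "a\<^sup>2 \<le> \<bar>t q\<bar>\<^sup>2" using a by (intro power_mono) auto
      then have "a\<^sup>2 \<le> (t q)\<^sup>2" by simp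
      then have "exp (- (t q)\<^sup>2 / 2) \<le> exp (- a\<^sup>2 / 2)" by simp
      then show ?thesis unfolding Hq EC using C0 by simp
    qed
    have s1: "0 \<le> (\<Sum>q\<in>Q. w q * H q)" "(\<Sum>q\<in>Q. w q * H q) \<le> W * E"
      using Hb w0 unfolding W_def sum_distrib_right
      by (auto intro!: sum_nonneg sum_mono mult_left_mono)
    have s2: "0 \<le> (\<Sum>q\<in>Q. u q * H q)" "(\<Sum>q\<in>Q. u q * H q) \<le> W * E"
      using Hb u0 unfolding W_def sw[symmetric] sum_distrib_right
      by (auto intro!: sum_nonneg sum_mono mult_left_mono)
    have "(\<Sum>q\<in>Q. (w q - u q) * H q) = (\<Sum>q\<in>Q. w q * H q) - (\<Sum>q\<in>Q. u q * H q)"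
      by (simp add: left_diff_distrib sum_subtractf)
    then show ?thesis using s1 s2 by linarith
  next
    case False
    then obtain q0 where q0: "q0 \<in> Q" "\<bar>y - R (c q0)\<bar> < a * \<sigma>" by auto
    define k where "k = nat \<lfloor>27 / 2 * a\<^sup>2\<rfloor>"
    define n where "n = Suc k"
    define T where "T = (9 * a\<^sup>2 / 2) ^ n / fact n"
    have tb: "(t q)\<^sup>2 \<le> 9 * a\<^sup>2" if "q \<in> Q" for q
    proof -
      have "\<bar>y - R (c q)\<bar> \<le> \<bar>y - R (c q0)\<bar> + \<bar>R (c q0) - R (c q)\<bar>" by simp
      also have "\<dots> \<le> 3 * a * \<sigma>"
      proof -
        have "\<bar>R (c q0) - R (c q)\<bar> \<le> 2 * a * \<sigma>" using close q0 that by blast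
        then show ?thesis using q0(2) by linarith
      qed
      finally have yr: "\<bar>y - R (c q)\<bar> \<le> 3 * a * \<sigma>" .
      have "\<bar>t q\<bar> = \<bar>y - R (c q)\<bar> / \<sigma>" unfolding t_def using \<sigma> by (simp add: abs_divide)
      also have "\<dots> \<le> 3 * a * \<sigma> / \<sigma>" using yr \<sigma> by (intro divide_right_mono) auto
      also have "\<dots> = 3 * a" using \<sigma> by simp
      finally have "\<bar>t q\<bar> \<le> 3 * a" .
      then have "\<bar>t q\<bar>\<^sup>2 \<le> (3 * a)\<^sup>2" by (intro power_mono) auto
      then show ?thesis by (simp add: power_mult_distrib)
    qed
    define P where "P = (\<lambda>\<beta>. \<Sum>m<n. (1 / fact m) * ((-1/2) * ((y - R \<beta>) / \<sigma>) ^ 2) ^ m)"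
    have pdP: "pd D P"
    proof -
      have p1: "pd \<zeta> (\<lambda>\<beta>. (1/\<sigma>) * (y + (-1) * R \<beta>))"
        by (rule pd_scale, rule pd.pd_add[OF pd_const], rule pd_scale[OF pdR])
      have e1: "(\<lambda>\<beta>. (1/\<sigma>) * (y + (-1) * R \<beta>)) = (\<lambda>\<beta>. (y - R \<beta>) / \<sigma>)"
        by (rule ext) (simp add: divide_simps)
      have p2: "pd (2 * \<zeta>) (\<lambda>\<beta>. ((y - R \<beta>) / \<sigma>) ^ 2)"
        using pd_power[OF p1[unfolded e1], of 2] .
      have p3: "pd (2 * \<zeta>) (\<lambda>\<beta>. (-1/2) * ((y - R \<beta>) / \<sigma>) ^ 2)"
        by (rule pd_scale[OF p2])
      show ?thesis unfolding P_def
      proof (rule pd_sum)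
        fix m assume "m \<in> {..<n}"
        then have mk: "m \<le> k" unfolding n_def by simp
        have q1: "pd (m * (2 * \<zeta>)) (\<lambda>\<beta>. ((-1/2) * ((y - R \<beta>) / \<sigma>) ^ 2) ^ m)"
          by (rule pd_power[OF p3])
        have "m * (2 * \<zeta>) \<le> 2 * k * \<zeta>" using mk by simp
        then have "m * (2 * \<zeta>) \<le> D" using Dge unfolding k_def by linarith
        from pd_le[OF q1 this]
        show "pd D (\<lambda>\<beta>. (1 / fact m) * ((-1/2) * ((y - R \<beta>) / \<sigma>) ^ 2) ^ m)"
          by (rule pd_scale)
      qed simp
    qed
    have Pzero: "(\<Sum>q\<in>Q. (w q - u q) * P (c q)) = 0"
      by (rule pd_moment[OF pdP fin mom])
    define Rem where "Rem = (\<lambda>q. exp (- (t q)\<^sup>2 / 2) - P (c q))"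
    have Rb: "\<bar>Rem q\<bar> \<le> T" if "q \<in> Q" for q
    proof -
      have "Rem q = exp (- ((t q)\<^sup>2 / 2)) - (\<Sum>m<n. (- ((t q)\<^sup>2 / 2)) ^ m / fact m)"
        unfolding Rem_def P_def t_def by (simp add: power2_eq_square mult_ac)
      then have "\<bar>Rem q\<bar> \<le> ((t q)\<^sup>2 / 2) ^ n / fact n"
        using taylor_negexp[of "(t q)\<^sup>2 / 2" n] unfolding n_def by simp
      also have "\<dots> \<le> T" unfolding T_def using tb[OF that]
        by (intro divide_right_mono power_mono) auto
      finally show ?thesis .
    qed
    have "(\<Sum>q\<in>Q. (w q - u q) * H q) = C * (\<Sum>q\<in>Q. (w q - u q) * P (c q)) + C * (\<Sum>q\<in>Q. (w q - u q) * Rem q)"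
    proof -
      have "(w q - u q) * H q = C * ((w q - u q) * P (c q)) + C * ((w q - u q) * Rem q)" for q
        unfolding Hq Rem_def by (simp add: algebra_simps)
      then show ?thesis by (simp add: sum.distrib sum_distrib_left)
    qed
    then have eq: "(\<Sum>q\<in>Q. (w q - u q) * H q) = C * (\<Sum>q\<in>Q. (w q - u q) * Rem q)"
      using Pzero by simp
    have "\<bar>\<Sum>q\<in>Q. (w q - u q) * Rem q\<bar> \<le> (\<Sum>q\<in>Q. \<bar>(w q - u q) * Rem q\<bar>)" by (rule sum_abs)
    also have "\<dots> \<le> (\<Sum>q\<in>Q. (w q + u q) * T)"
    proof (rule sum_mono)
      fix q assume q: "q \<in> Q"
      have "0 \<le> w q" "0 \<le> u q" using w0 u0 q by auto
      then have "\<bar>w q - u q\<bar> \<le> w q + u q" by linarith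
      then show "\<bar>(w q - u q) * Rem q\<bar> \<le> (w q + u q) * T"
        unfolding abs_mult using Rb[OF q] by (intro mult_mono) auto
    qed
    also have "\<dots> = 2 * W * T" unfolding W_def sum_distrib_right[symmetric] sum.distrib sw by simp
    also have "\<dots> \<le> W * exp (- a\<^sup>2 / 2)"
    proof -
      have "2 * T \<le> exp (- a\<^sup>2 / 2)" using num_bound[OF a] unfolding T_def n_def k_def .
      then have "W * (2 * T) \<le> W * exp (- a\<^sup>2 / 2)" using W0 by (rule mult_left_mono)
      then show ?thesis by (simp add: mult_ac)
    qed
    finally have "\<bar>\<Sum>q\<in>Q. (w q - u q) * Rem q\<bar> \<le> W * exp (- a\<^sup>2 / 2)" .
    then show ?thesis unfolding eq EC abs_mult using C0
      by (simp add: mult_left_mono mult_ac)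
  qed
  then show ?thesis unfolding W_def E_def H_def t_def .
qed

lemma discr:
  fixes M :: "'a measure" and f :: "'a \<Rightarrow> real"
  assumes ps: "prob_space M" and fin: "finite PP" and meas: "\<forall>P\<in>PP. Pc P \<in> sets M"
    and cov: "\<forall>\<beta>\<in>K. \<exists>P0\<in>PP. \<beta> \<in> Pc P0 \<and> (\<forall>P\<in>PP. P \<noteq> P0 \<longrightarrow> \<beta> \<notin> Pc P)"
    and AEK: "AE \<beta> in M. \<beta> \<in> K"
    and fm: "f \<in> borel_measurable M" and fb: "\<forall>\<beta>. \<bar>f \<beta>\<bar> \<le> B"
    and osc: "\<forall>P\<in>PP. \<forall>\<beta>\<in>Pc P \<inter> K. \<bar>f \<beta> - f (cp P)\<bar> \<le> \<delta>"
  shows "\<bar>(\<integral>\<beta>. f \<beta> \<partial>M) - (\<Sum>P\<in>PP. measure M (Pc P) * f (cp P))\<bar> \<le> \<delta>"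
proof -
  interpret prob_space M by (rule ps)
  define g where "g = (\<lambda>\<beta>. \<Sum>P\<in>PP. indicator (Pc P) \<beta> * f (cp P))"
  have ii: "integrable M (\<lambda>\<beta>. indicator (Pc P) \<beta> * f (cp P))" if "P \<in> PP" for P
    using meas that by (intro integrable_mult_left integrable_real_indicator) (auto simp: less_top[symmetric])
  have ig: "integrable M g" unfolding g_def by (rule Bochner_Integration.integrable_sum[where f="\<lambda>P \<beta>. indicator (Pc P) \<beta> * f (cp P)"], rule ii)
  have if': "integrable M f" using fb fm by (intro integrable_const_bound[where B=B]) auto
  have "(\<integral>\<beta>. g \<beta> \<partial>M) = (\<Sum>P\<in>PP. \<integral>\<beta>. indicator (Pc P) \<beta> * f (cp P) \<partial>M)"
    unfolding g_def by (rule Bochner_Integration.integral_sum[where f="\<lambda>P \<beta>. indicator (Pc P) \<beta> * f (cp P)"], rule ii)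
  also have "\<dots> = (\<Sum>P\<in>PP. measure M (Pc P) * f (cp P))"
  proof (rule sum.cong)
    fix P assume "P \<in> PP"
    then have "Pc P \<inter> space M = Pc P" using meas sets.Int_space_eq2 by blast
    then show "(\<integral>\<beta>. indicator (Pc P) \<beta> * f (cp P) \<partial>M) = measure M (Pc P) * f (cp P)"
      by simp
  qed simp
  finally have eg: "(\<integral>\<beta>. g \<beta> \<partial>M) = (\<Sum>P\<in>PP. measure M (Pc P) * f (cp P))" .
  have pt: "\<bar>f \<beta> - g \<beta>\<bar> \<le> \<delta>" if bK: "\<beta> \<in> K" for \<beta>
  proof -
    obtain P0 where P0a: "P0 \<in> PP" and P0b: "\<beta> \<in> Pc P0 \<and> (\<forall>P\<in>PP. P \<noteq> P0 \<longrightarrow> \<beta> \<notin> Pc P)"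
      using bspec[OF cov bK] by (rule bexE)
    note P0 = P0a conjunct1[OF P0b] conjunct2[OF P0b]
    have "g \<beta> = (\<Sum>P\<in>PP. if P = P0 then f (cp P) else 0)"
      unfolding g_def
    proof (rule sum.cong[OF refl])
      fix P assume P: "P \<in> PP"
      show "indicator (Pc P) \<beta> * f (cp P) = (if P = P0 then f (cp P) else 0)"
      proof (cases "P = P0")
        case True then show ?thesis using P0(2) by simp
      next
        case False then have "\<beta> \<notin> Pc P" using P0(3) P by blast
        then show ?thesis using False by simp
      qed
    qed
    also have "\<dots> = f (cp P0)" using P0(1) fin by (simp add: sum.delta')
    finally have gb: "g \<beta> = f (cp P0)" .
    have "\<beta> \<in> Pc P0 \<inter> K" using P0(2) bK by blast
    then have "\<bar>f \<beta> - f (cp P0)\<bar> \<le> \<delta>" using osc P0(1) by blast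
    then show ?thesis using gb by simp
  qed
  have "\<bar>(\<integral>\<beta>. f \<beta> - g \<beta> \<partial>M)\<bar> \<le> (\<integral>\<beta>. \<bar>f \<beta> - g \<beta>\<bar> \<partial>M)"
    by (rule integral_abs_bound)
  also have "\<dots> \<le> (\<integral>\<beta>. \<delta> \<partial>M)"
    using if' ig AEK pt by (intro integral_mono_AE) auto
  also have "\<dots> = \<delta>" by (simp add: prob_space)
  finally show ?thesis using eg if' ig by (simp add: integral_diff)
qed

lemma gauss_lip_aux: "\<bar>(z::real) * exp (- z\<^sup>2 / 2)\<bar> \<le> 1"
proof -
  have "\<bar>z\<bar> \<le> 1 + z\<^sup>2 / 2"
  proof -
    have "0 \<le> (\<bar>z\<bar> - 1)\<^sup>2" by simp
    then show ?thesis by (simp add: power2_eq_square algebra_simps)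
  qed
  also have "\<dots> \<le> exp (z\<^sup>2 / 2)" by (rule exp_ge_add_one_self)
  finally have "\<bar>z\<bar> \<le> exp (z\<^sup>2 / 2)" .
  then have "\<bar>z\<bar> * exp (- z\<^sup>2 / 2) \<le> exp (z\<^sup>2 / 2) * exp (- z\<^sup>2 / 2)"
    by (intro mult_right_mono) auto
  also have "\<dots> = 1" by (simp add: exp_add[symmetric])
  finally show ?thesis by (simp add: abs_mult)
qed

lemma gauss_lip_lt: "(s::real) < t \<Longrightarrow> \<bar>exp (- t\<^sup>2 / 2) - exp (- s\<^sup>2 / 2)\<bar> \<le> t - s"
proof -
  assume st: "s < t"
  have "\<And>x. DERIV (\<lambda>z. exp (- z\<^sup>2 / 2)) x :> exp (- x\<^sup>2 / 2) * (- x)"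
    by (auto intro!: derivative_eq_intros)
  then obtain z where "exp (- t\<^sup>2 / 2) - exp (- s\<^sup>2 / 2) = (t - s) * (exp (- z\<^sup>2 / 2) * (- z))"
    using MVT2[OF st, of "\<lambda>z. exp (- z\<^sup>2 / 2)" "\<lambda>x. exp (- x\<^sup>2 / 2) * (- x)"] by blast
  then have "\<bar>exp (- t\<^sup>2 / 2) - exp (- s\<^sup>2 / 2)\<bar> = (t - s) * \<bar>z * exp (- z\<^sup>2 / 2)\<bar>"
    using st by (simp add: abs_mult)
  also have "\<dots> \<le> (t - s) * 1" using st gauss_lip_aux[of z] by (intro mult_left_mono) auto
  finally show ?thesis by simp
qed

lemma gauss_lip: "\<bar>exp (- (t::real)\<^sup>2 / 2) - exp (- (s::real)\<^sup>2 / 2)\<bar> \<le> \<bar>t - s\<bar>"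
proof (cases s t rule: linorder_cases)
  case less then show ?thesis using gauss_lip_lt[OF less] by simp
next
  case equal then show ?thesis by simp
next
  case greater then show ?thesis using gauss_lip_lt[OF greater] by (simp add: abs_minus_commute)
qed

lemma pmf_finite_weights:
  fixes cp :: "'q \<Rightarrow> 'a" and u :: "'q \<Rightarrow> real"
  assumes fin: "finite Q" and u0: "\<forall>q\<in>Q. u q \<ge> 0" and su: "sum u Q = 1"
  shows "\<exists>G'::'a pmf. set_pmf G' \<subseteq> cp ` Q \<and>
            (\<forall>f::'a \<Rightarrow> real. (\<integral>z. f z \<partial>measure_pmf G') = (\<Sum>q\<in>Q. u q * f (cp q)))"
proof -
  obtain ls where ls: "distinct ls" "set ls = Q" using finite_distinct_list[OF fin] by blast
  define xs where "xs = map (\<lambda>q. (cp q, u q)) ls"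
  have wf: "pmf_of_list_wf xs"
  proof (rule pmf_of_list_wfI)
    show "x \<ge> 0" if "x \<in> set (map snd xs)" for x using that u0 ls unfolding xs_def by auto
    have "sum_list (map snd xs) = sum_list (map u ls)" unfolding xs_def by (simp add: comp_def)
    also have "\<dots> = sum u Q" using ls by (simp add: sum_list_distinct_conv_sum_set)
    finally show "sum_list (map snd xs) = 1" using su by simp
  qed
  define G' where "G' = pmf_of_list xs"
  have sp: "set_pmf G' \<subseteq> cp ` Q" unfolding G'_def using set_pmf_of_list[OF wf] ls unfolding xs_def by auto
  have pm: "pmf G' z = (\<Sum>q\<in>{q\<in>Q. cp q = z}. u q)" for z
  proof -
    have "pmf G' z = sum_list (map snd (filter (\<lambda>p. fst p = z) xs))"
      unfolding G'_def by (rule pmf_pmf_of_list[OF wf])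
    also have "\<dots> = sum_list (map u (filter (\<lambda>q. cp q = z) ls))"
      unfolding xs_def by (simp add: filter_map comp_def)
    also have "\<dots> = sum u (set (filter (\<lambda>q. cp q = z) ls))"
      using ls by (simp add: sum_list_distinct_conv_sum_set)
    also have "set (filter (\<lambda>q. cp q = z) ls) = {q\<in>Q. cp q = z}" using ls by auto
    finally show ?thesis .
  qed
  have "(\<integral>z. f z \<partial>measure_pmf G') = (\<Sum>q\<in>Q. u q * f (cp q))" for f :: "'a \<Rightarrow> real"
  proof -
    have "(\<integral>z. f z \<partial>measure_pmf G') = (\<Sum>z\<in>cp ` Q. f z * pmf G' z)"
      using sp fin by (intro integral_measure_pmf_real) auto
    also have "\<dots> = (\<Sum>z\<in>cp ` Q. (\<Sum>q\<in>{q\<in>Q. cp q = z}. u q * f (cp q)))"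
      unfolding pm by (rule sum.cong[OF refl]) (simp add: sum_distrib_left mult.commute)
    also have "\<dots> = (\<Sum>q\<in>Q. u q * f (cp q))"
      using sum.image_gen[OF fin, of "\<lambda>q. u q * f (cp q)" cp] by simp
    finally show ?thesis .
  qed
  then show ?thesis using sp by blast
qed

lemma fin_cover:
  fixes K :: "'a::metric_space set"
  assumes "compact K" "e > 0"
  shows "\<exists>X. finite X \<and> (\<forall>t\<in>K. \<exists>s\<in>X. dist s t \<le> e)"
proof -
  have "K \<subseteq> (\<Union>c\<in>K. ball c e)" using assms(2) by auto
  then obtain C' where C': "C' \<subseteq> K" "finite C'" "K \<subseteq> (\<Union>c\<in>C'. ball c e)"
    using compactE_image[OF assms(1), of K "\<lambda>c. ball c e"] by blast
  have "\<forall>t\<in>K. \<exists>s\<in>C'. dist s t \<le> e"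
  proof
    fix t assume "t \<in> K"
    then obtain s where "s \<in> C'" "t \<in> ball s e" using C'(3) by blast
    then show "\<exists>s\<in>C'. dist s t \<le> e" by (intro bexI[of _ s]) auto
  qed
  then show ?thesis using C'(2) by blast
qed

lemma disjointed_sets_in:
  assumes "\<And>n. A n \<in> sets M"
  shows "disjointed A n \<in> sets M"
proof -
  have "disjointed A n = A n - (\<Union>i\<in>{..<n}. A i)" unfolding disjointed_def by auto
  also have "\<dots> \<in> sets M" using assms by (intro sets.Diff sets.finite_UN) auto
  finally show ?thesis .
qed

lemma box_card:
  "finite {\<alpha>::'p::finite \<Rightarrow> nat. \<forall>i. \<alpha> i \<le> D} \<and> card {\<alpha>::'p::finite \<Rightarrow> nat. \<forall>i. \<alpha> i \<le> D} = (D + 1) ^ CARD('p)"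
proof -
  have e: "{\<alpha>::'p \<Rightarrow> nat. \<forall>i. \<alpha> i \<le> D} = PiE UNIV (\<lambda>_. {..D})"
    by (auto simp: PiE_def Pi_def)
  show ?thesis unfolding e by (simp add: card_PiE finite_PiE)
qed

theorem lemma6p5:
  fixes K :: "(real ^ 'p) set" and S0 :: "'x set" and \<sigma> :: real
    and r :: "'x \<Rightarrow> real ^ 'p \<Rightarrow> real" and \<zeta> :: nat
    and G :: "(real ^ 'p) measure" and a :: real
  assumes "compact K"
    and "\<sigma> > 0"
    and "\<zeta> \<ge> 1"
    and "\<forall>x. poly_deg_le \<zeta> (r x)"
    and "0 < lipS r K S0" and "lipS r K S0 < \<infinity>"
    and "prob_space G" and "sets G = sets borel" and "measure G K = 1"
    and "a \<ge> 1"
  shows "\<exists>G' :: (real ^ 'p) pmf.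
           finite (set_pmf G') \<and> set_pmf G' \<subseteq> K \<and>
           card (set_pmf G') \<le>
             (2 * nat \<lfloor>27 / 2 * a\<^sup>2\<rfloor> * \<zeta> + 1) ^ CARD('p)
               * covering_number (a * \<sigma> / real_of_ereal (lipS r K S0)) K + 1 \<and>
           (\<forall>x\<in>S0. \<forall>y::real.
              \<bar>mix_density r \<sigma> G x y - mix_density r \<sigma> (measure_pmf G') x y\<bar>
                \<le> (1 + 1 / sqrt (2 * pi)) * exp (- a\<^sup>2 / 2) / (sqrt (2 * pi) * \<sigma>))"
proof -
  note cK = assms(1) and \<sigma> = assms(2) and a = assms(10) and ps = assms(7) and sG = assms(8)
  interpret prob_space G by (rule ps)
  define L where "L = real_of_ereal (lipS r K S0)"
  have LE: "lipS r K S0 = ereal L"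
    unfolding L_def using assms(5,6) by (intro ereal_real'[symmetric]) auto
  have Lpos: "L > 0" using assms(5) unfolding LE by simp
  have lip: "\<bar>r x b1 - r x b2\<bar> \<le> L * norm (b1 - b2)" if x: "x \<in> S0" and b: "b1 \<in> K" "b2 \<in> K" for x b1 b2
  proof (cases "b1 = b2")
    case True then show ?thesis by simp
  next
    case False
    have "ereal (\<bar>r x b1 - r x b2\<bar> / norm (b1 - b2)) \<le> lipK r K x"
      unfolding lipK_def
      by (rule SUP_upper2[of "(b1, b2)"]) (use b False in auto)
    also have "\<dots> \<le> lipS r K S0" unfolding lipS_def by (rule SUP_upper[OF x])
    finally have "\<bar>r x b1 - r x b2\<bar> / norm (b1 - b2) \<le> L" unfolding LE by simp
    moreover have "norm (b1 - b2) > 0" using False by simp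
    ultimately show ?thesis by (simp add: divide_le_eq mult.commute)
  qed
  have pdr: "pd \<zeta> (r x)" for x using assms(4) poly_deg_le_pd by blast
  define \<epsilon> where "\<epsilon> = a * \<sigma> / L"
  have \<epsilon>0: "\<epsilon> > 0" unfolding \<epsilon>_def using a \<sigma> Lpos by simp
  define N where "N = covering_number \<epsilon> K"
  obtain S where S: "finite S" "card S = N" "\<forall>t\<in>K. \<exists>s\<in>S. dist s t \<le> \<epsilon>"
  proof -
    obtain X where X: "finite X" "\<forall>t\<in>K. \<exists>s\<in>X. dist s t \<le> \<epsilon>" using fin_cover[OF cK \<epsilon>0] by blast
    have "\<exists>n S. finite S \<and> card S = n \<and> (\<forall>t\<in>K. \<exists>s\<in>S. dist s t \<le> \<epsilon>)" using X by blast
    then have "\<exists>S. finite S \<and> card S = N \<and> (\<forall>t\<in>K. \<exists>s\<in>S. dist s t \<le> \<epsilon>)"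
      unfolding N_def covering_number_def by (rule LeastI_ex)
    then show ?thesis using that by blast
  qed
  define \<eta> where "\<eta> = \<sigma> * exp (- a\<^sup>2 / 2) / (2 * L * sqrt (2 * pi))"
  have \<eta>0: "\<eta> > 0" unfolding \<eta>_def using \<sigma> Lpos by simp
  obtain T where T: "finite T" "\<forall>t\<in>K. \<exists>s\<in>T. dist s t \<le> \<eta>" using fin_cover[OF cK \<eta>0] by blast
  obtain ss where ss: "distinct ss" "set ss = S" using finite_distinct_list[OF S(1)] by blast
  obtain tt where tt: "distinct tt" "set tt = T" using finite_distinct_list[OF T(1)] by blast
  define A where "A = (\<lambda>n. if n < length ss then K \<inter> cball (ss ! n) \<epsilon> else {})"
  define B where "B = (\<lambda>l. if l < length tt then K \<inter> cball (tt ! l) \<eta> else {})"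
  define Pc where "Pc = (\<lambda>P::nat \<times> nat. disjointed A (fst P) \<inter> disjointed B (snd P))"
  define PP where "PP = {P. fst P < length ss \<and> snd P < length tt \<and> Pc P \<noteq> {}}"
  define cp where "cp = (\<lambda>P. SOME \<beta>. \<beta> \<in> Pc P)"
  define cell where "cell = (\<lambda>P::nat \<times> nat. ss ! fst P)"
  define w where "w = (\<lambda>P. measure G (Pc P))"
  have finPP: "finite PP"
    by (rule finite_subset[of _ "{..<length ss} \<times> {..<length tt}"]) (auto simp: PP_def)
  have cpin: "cp P \<in> Pc P" if "P \<in> PP" for P
  proof -
    have "Pc P \<noteq> {}" using that unfolding PP_def by simp
    then have "\<exists>\<beta>. \<beta> \<in> Pc P" by blast
    then show ?thesis unfolding cp_def by (rule someI_ex)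
  qed
  have Pcsub: "Pc P \<subseteq> K \<inter> cball (cell P) \<epsilon> \<inter> cball (tt ! snd P) \<eta>" if "P \<in> PP" for P
  proof -
    have "Pc P \<subseteq> A (fst P) \<inter> B (snd P)" unfolding Pc_def using disjointed_subset[of A "fst P"] disjointed_subset[of B "snd P"] by blast
    moreover have "fst P < length ss" "snd P < length tt" using that unfolding PP_def by auto
    then have "A (fst P) = K \<inter> cball (cell P) \<epsilon>" "B (snd P) = K \<inter> cball (tt ! snd P) \<eta>"
      unfolding A_def B_def cell_def by auto
    ultimately show ?thesis by blast
  qed
  have cellS: "cell P \<in> S" if "P \<in> PP" for P using that ss unfolding PP_def cell_def by auto
  have measPc: "Pc P \<in> sets G" for P
  proof -
    have "A n \<in> sets borel" for n unfolding A_def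
      using cK by (auto intro!: borel_closed closed_Int compact_imp_closed)
    moreover have "B n \<in> sets borel" for n unfolding B_def
      using cK by (auto intro!: borel_closed closed_Int compact_imp_closed)
    ultimately show ?thesis unfolding Pc_def sG
      by (intro sets.Int disjointed_sets_in) auto
  qed
  have cov: "\<forall>\<beta>\<in>K. \<exists>P0\<in>PP. \<beta> \<in> Pc P0 \<and> (\<forall>P\<in>PP. P \<noteq> P0 \<longrightarrow> \<beta> \<notin> Pc P)"
  proof
    fix \<beta> assume bK: "\<beta> \<in> K"
    obtain s where s: "s \<in> S" "dist s \<beta> \<le> \<epsilon>" using S(3) bK by blast
    obtain n where n: "n < length ss" "ss ! n = s" using ss(2) s(1) by (metis in_set_conv_nth)
    have "\<beta> \<in> A n" unfolding A_def using n s bK by simp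
    then have "\<beta> \<in> (\<Union>i. A i)" by blast
    then have "\<beta> \<in> (\<Union>i. disjointed A i)" by (simp only: UN_disjointed_eq)
    then obtain n' where n': "\<beta> \<in> disjointed A n'" by blast
    have n'l: "n' < length ss"
    proof (rule ccontr)
      assume "\<not> n' < length ss"
      then have "A n' = {}" unfolding A_def by simp
      then show False using n' disjointed_subset[of A n'] by blast
    qed
    obtain t where t: "t \<in> T" "dist t \<beta> \<le> \<eta>" using T(2) bK by blast
    obtain l where l: "l < length tt" "tt ! l = t" using tt(2) t(1) by (metis in_set_conv_nth)
    have "\<beta> \<in> B l" unfolding B_def using l t bK by simp
    then have "\<beta> \<in> (\<Union>i. B i)" by blast
    then have "\<beta> \<in> (\<Union>i. disjointed B i)" by (simp only: UN_disjointed_eq)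
    then obtain l' where l': "\<beta> \<in> disjointed B l'" by blast
    have l'l: "l' < length tt"
    proof (rule ccontr)
      assume "\<not> l' < length tt"
      then have "B l' = {}" unfolding B_def by simp
      then show False using l' disjointed_subset[of B l'] by blast
    qed
    have inP0: "\<beta> \<in> Pc (n', l')" unfolding Pc_def using n' l' by simp
    then have P0: "(n', l') \<in> PP" unfolding PP_def using n'l l'l by auto
    have uniq: "\<beta> \<notin> Pc P" if "P \<in> PP" "P \<noteq> (n', l')" for P
    proof
      assume bP: "\<beta> \<in> Pc P"
      have dA: "disjoint_family (disjointed A)" "disjoint_family (disjointed B)"
        by (rule disjoint_family_disjointed)+
      have "\<beta> \<in> disjointed A (fst P)" "\<beta> \<in> disjointed B (snd P)" using bP unfolding Pc_def by auto
      then have "fst P = n'" "snd P = l'" using n' l' dA unfolding disjoint_family_on_def by blast+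
      then show False using that(2) by (cases P) simp
    qed
    show "\<exists>P0\<in>PP. \<beta> \<in> Pc P0 \<and> (\<forall>P\<in>PP. P \<noteq> P0 \<longrightarrow> \<beta> \<notin> Pc P)"
      using P0 inP0 uniq by blast
  qed
  have AEK: "AE \<beta> in G. \<beta> \<in> K" using assms(9) by (intro AE_prob_1) simp
  have w0: "\<forall>P\<in>PP. w P \<ge> 0" unfolding w_def by simp
  have sw: "sum w PP = 1"
  proof -
    have "\<bar>(\<integral>\<beta>. 1 \<partial>G) - (\<Sum>P\<in>PP. measure G (Pc P) * 1)\<bar> \<le> 0"
      by (rule discr[OF ps finPP _ cov AEK, of "\<lambda>_. 1" 1]) (auto simp: measPc)
    then show ?thesis unfolding w_def by (simp add: prob_space)
  qed
  define k where "k = nat \<lfloor>27 / 2 * a\<^sup>2\<rfloor>"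
  define D where "D = 2 * k * \<zeta>"
  define Box where "Box = {\<alpha>::'p \<Rightarrow> nat. \<forall>i. \<alpha> i \<le> D}"
  have Box: "finite Box" "card Box = (D + 1) ^ CARD('p)" using box_card[of D] unfolding Box_def by auto
  define I where "I = S \<times> Box"
  have finI: "finite I" unfolding I_def using S(1) Box(1) by simp
  have cardI: "card I = N * (D + 1) ^ CARD('p)" unfolding I_def using S(2) Box(2) by (simp add: card_cartesian_product)
  define v where "v = (\<lambda>P (sa::(real ^ 'p) \<times> ('p \<Rightarrow> nat)). if cell P = fst sa then mnm (snd sa) (cp P) else 0)"
  obtain PP' u where c: "PP' \<subseteq> PP" "card PP' \<le> card I + 1" "\<forall>q\<in>PP'. u q \<ge> 0" "sum u PP' = 1"
      "\<forall>i\<in>I. (\<Sum>q\<in>PP'. u q * v q i) = (\<Sum>q\<in>PP. w q * v q i)"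
    using carath[OF finPP finI w0 sw, of v] by blast
  have finPP': "finite PP'" using finite_subset[OF c(1) finPP] .
  define u' where "u' = (\<lambda>P. if P \<in> PP' then u P else 0)"
  have su': "(\<Sum>P\<in>PP. u' P * g P) = (\<Sum>P\<in>PP'. u P * g P)" for g
    unfolding u'_def by (rule sum.mono_neutral_cong_right) (use finPP c(1) in auto)
  obtain G' where G': "set_pmf G' \<subseteq> cp ` PP'" "\<forall>f. (\<integral>z. f z \<partial>measure_pmf G') = (\<Sum>q\<in>PP'. u q * f (cp q))"
    using pmf_finite_weights[OF finPP' c(3) c(4), of cp] by blast
  have finG': "finite (set_pmf G')" using G'(1) finPP' by (meson finite_imageI finite_subset)
  have subK: "set_pmf G' \<subseteq> K"
  proof -
    have "cp P \<in> K" if "P \<in> PP'" for P using cpin[of P] Pcsub[of P] that c(1) by blast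
    then show ?thesis using G'(1) by blast
  qed
  have covN: "covering_number (a * \<sigma> / real_of_ereal (lipS r K S0)) K = N"
    unfolding N_def \<epsilon>_def L_def ..
  have cardG': "card (set_pmf G') \<le> (2 * nat \<lfloor>27 / 2 * a\<^sup>2\<rfloor> * \<zeta> + 1) ^ CARD('p) * N + 1"
  proof -
    have "card (set_pmf G') \<le> card (cp ` PP')" using G'(1) finPP' by (intro card_mono) auto
    also have "\<dots> \<le> card PP'" by (rule card_image_le[OF finPP'])
    also have "\<dots> \<le> card I + 1" by (rule c(2))
    finally show ?thesis unfolding cardI D_def k_def by (simp add: mult.commute)
  qed
  have bound: "\<forall>x\<in>S0. \<forall>y::real.
              \<bar>mix_density r \<sigma> G x y - mix_density r \<sigma> (measure_pmf G') x y\<bar>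
                \<le> (1 + 1 / sqrt (2 * pi)) * exp (- a\<^sup>2 / 2) / (sqrt (2 * pi) * \<sigma>)"
  proof (intro ballI allI)
    fix x y assume x: "x \<in> S0"
    define h where "h = (\<lambda>\<beta>. (1 / \<sigma>) * std_normal_density ((y - r x \<beta>) / \<sigma>))"
    define E where "E = exp (- a\<^sup>2 / 2) / (sqrt (2 * pi) * \<sigma>)"
    define \<delta> where "\<delta> = exp (- a\<^sup>2 / 2) / (sqrt (2 * pi) * (sqrt (2 * pi) * \<sigma>))"
    have m1: "mix_density r \<sigma> G x y = (\<integral>\<beta>. h \<beta> \<partial>G)" unfolding mix_density_def h_def ..
    have m2: "mix_density r \<sigma> (measure_pmf G') x y = (\<Sum>P\<in>PP. u' P * h (cp P))"
    proof -
      have "mix_density r \<sigma> (measure_pmf G') x y = (\<integral>z. h z \<partial>measure_pmf G')"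
        unfolding mix_density_def h_def ..
      also have "\<dots> = (\<Sum>q\<in>PP'. u q * h (cp q))" using G'(2) by blast
      also have "\<dots> = (\<Sum>P\<in>PP. u' P * h (cp P))" using su'[of "\<lambda>P. h (cp P)"] by simp
      finally show ?thesis .
    qed
    have hcont: "continuous_on UNIV h"
      unfolding h_def std_normal_density_def using pd_continuous[OF pdr[of x]] \<sigma>
      by (intro continuous_intros) auto
    have hmeas: "h \<in> borel_measurable G"
      by (subst measurable_cong_sets[OF sG refl]) (rule borel_measurable_continuous_onI[OF hcont])
    have s1: "sqrt (2 * pi) \<ge> 1" using pi_gt3 by (simp add: real_le_rsqrt)
    have hb: "\<forall>\<beta>. \<bar>h \<beta>\<bar> \<le> 1 / \<sigma>"
    proof
      fix \<beta>
      have "0 \<le> std_normal_density ((y - r x \<beta>) / \<sigma>)" by simp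
      moreover have "std_normal_density ((y - r x \<beta>) / \<sigma>) \<le> 1"
      proof -
        have "exp (- ((y - r x \<beta>) / \<sigma>)\<^sup>2 / 2) \<le> 1" by simp
        moreover have "1 / sqrt (2 * pi) \<le> 1" using s1 by simp
        ultimately show ?thesis unfolding std_normal_density_def
          by (metis exp_ge_zero mult_le_one zero_le_divide_1_iff zero_le_one order_trans s1)
      qed
      ultimately show "\<bar>h \<beta>\<bar> \<le> 1 / \<sigma>" unfolding h_def using \<sigma>
        by (simp add: abs_mult divide_le_cancel)
    qed
    have osc: "\<forall>P\<in>PP. \<forall>\<beta>\<in>Pc P \<inter> K. \<bar>h \<beta> - h (cp P)\<bar> \<le> \<delta>"
    proof (intro ballI)
      fix P \<beta> assume P: "P \<in> PP" and b: "\<beta> \<in> Pc P \<inter> K"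
      have cP: "cp P \<in> K \<inter> cball (tt ! snd P) \<eta>" using cpin[OF P] Pcsub[OF P] by blast
      have bP: "\<beta> \<in> K \<inter> cball (tt ! snd P) \<eta>" using b Pcsub[OF P] by blast
      have "norm (\<beta> - cp P) = dist \<beta> (cp P)" by (simp add: dist_norm)
      also have "\<dots> \<le> dist \<beta> (tt ! snd P) + dist (tt ! snd P) (cp P)" by (rule dist_triangle)
      also have "\<dots> \<le> \<eta> + \<eta>" using cP bP by (simp add: dist_commute)
      finally have nb: "norm (\<beta> - cp P) \<le> 2 * \<eta>" by simp
      have rb: "\<bar>r x \<beta> - r x (cp P)\<bar> \<le> L * (2 * \<eta>)"
        using lip[OF x, of \<beta> "cp P"] cP bP nb Lpos
        by (meson IntD1 mult_left_mono less_imp_le order_trans)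
      define t1 where "t1 = (y - r x \<beta>) / \<sigma>"
      define t2 where "t2 = (y - r x (cp P)) / \<sigma>"
      have "h \<beta> - h (cp P) = (1 / (\<sigma> * sqrt (2 * pi))) * (exp (- t1\<^sup>2 / 2) - exp (- t2\<^sup>2 / 2))"
        unfolding h_def std_normal_density_def t1_def t2_def by (simp add: algebra_simps)
      then have "\<bar>h \<beta> - h (cp P)\<bar> = (1 / (\<sigma> * sqrt (2 * pi))) * \<bar>exp (- t1\<^sup>2 / 2) - exp (- t2\<^sup>2 / 2)\<bar>"
        using \<sigma> by (simp add: abs_mult)
      also have "\<dots> \<le> (1 / (\<sigma> * sqrt (2 * pi))) * \<bar>t1 - t2\<bar>"
        using \<sigma> gauss_lip[of t1 t2] by (intro mult_left_mono) auto
      also have "\<dots> \<le> (1 / (\<sigma> * sqrt (2 * pi))) * (\<sigma> * exp (- a\<^sup>2 / 2) / sqrt (2 * pi) / \<sigma>)"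
      proof (rule mult_left_mono)
        have "\<bar>t1 - t2\<bar> = \<bar>r x \<beta> - r x (cp P)\<bar> / \<sigma>"
          unfolding t1_def t2_def using \<sigma> by (simp add: diff_divide_distrib[symmetric] abs_divide abs_minus_commute)
        also have "\<dots> \<le> L * (2 * \<eta>) / \<sigma>" using rb \<sigma> by (intro divide_right_mono) auto
        also have "L * (2 * \<eta>) = \<sigma> * exp (- a\<^sup>2 / 2) / sqrt (2 * pi)"
          unfolding \<eta>_def using Lpos by simp
        finally show "\<bar>t1 - t2\<bar> \<le> \<sigma> * exp (- a\<^sup>2 / 2) / sqrt (2 * pi) / \<sigma>" .
        show "0 \<le> 1 / (\<sigma> * sqrt (2 * pi))" using \<sigma> by simp
      qed
      also have "(1 / (\<sigma> * sqrt (2 * pi))) * (\<sigma> * exp (- a\<^sup>2 / 2) / sqrt (2 * pi) / \<sigma>) = \<delta>"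
        unfolding \<delta>_def using \<sigma> by (simp add: field_simps)
      finally show "\<bar>h \<beta> - h (cp P)\<bar> \<le> \<delta>" .
    qed
    have d1: "\<bar>(\<integral>\<beta>. h \<beta> \<partial>G) - (\<Sum>P\<in>PP. measure G (Pc P) * h (cp P))\<bar> \<le> \<delta>"
      by (rule discr[OF ps finPP _ cov AEK hmeas hb osc]) (simp add: measPc)
    define Qs where "Qs = (\<lambda>s. {P \<in> PP. cell P = s})"
    have finQ: "finite (Qs s)" for s unfolding Qs_def using finPP by simp
    have restr: "(\<Sum>q\<in>PP. f q * v q (s, \<alpha>)) = (\<Sum>q\<in>Qs s. f q * mnm \<alpha> (cp q))" for f s \<alpha>
    proof -
      have "(\<Sum>q\<in>Qs s. f q * mnm \<alpha> (cp q)) = (\<Sum>q\<in>PP. if cell q = s then f q * mnm \<alpha> (cp q) else 0)"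
        unfolding Qs_def by (rule sum.inter_filter[OF finPP])
      also have "\<dots> = (\<Sum>q\<in>PP. f q * v q (s, \<alpha>))" unfolding v_def by (rule sum.cong) auto
      finally show ?thesis by simp
    qed
    have momcell: "(\<Sum>q\<in>Qs s. (w q - u' q) * mnm \<alpha> (cp q)) = 0" if "s \<in> S" "\<alpha> \<in> Box" for s \<alpha>
    proof -
      have "(s, \<alpha>) \<in> I" unfolding I_def using that by simp
      then have "(\<Sum>q\<in>PP'. u q * v q (s, \<alpha>)) = (\<Sum>q\<in>PP. w q * v q (s, \<alpha>))" using c(5) by blast
      then have "(\<Sum>q\<in>PP. u' q * v q (s, \<alpha>)) = (\<Sum>q\<in>PP. w q * v q (s, \<alpha>))" using su' by simp
      then have "(\<Sum>q\<in>Qs s. u' q * mnm \<alpha> (cp q)) = (\<Sum>q\<in>Qs s. w q * mnm \<alpha> (cp q))"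
        unfolding restr .
      then show ?thesis by (simp add: left_diff_distrib sum_subtractf)
    qed
    have cellb: "\<bar>\<Sum>q\<in>Qs s. (w q - u' q) * h (cp q)\<bar> \<le> sum w (Qs s) * E" if sS: "s \<in> S" for s
    proof -
      have zb: "(\<lambda>_. 0) \<in> Box" unfolding Box_def by simp
      have "(\<Sum>q\<in>Qs s. (w q - u' q) * mnm (\<lambda>_. 0) (cp q)) = 0" by (rule momcell[OF sS zb])
      then have swu: "sum u' (Qs s) = sum w (Qs s)" by (simp add: mnm_def sum_subtractf)
      have mom: "(\<Sum>q\<in>Qs s. (w q - u' q) * mnm \<alpha> (cp q)) = 0" if "sum \<alpha> UNIV \<le> D" for \<alpha>
      proof (rule momcell[OF sS])
        have "\<alpha> i \<le> D" for i using that member_le_sum[of i UNIV \<alpha>] by simp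
        then show "\<alpha> \<in> Box" unfolding Box_def by simp
      qed
      have close: "\<forall>q1\<in>Qs s. \<forall>q2\<in>Qs s. \<bar>r x (cp q1) - r x (cp q2)\<bar> \<le> 2 * a * \<sigma>"
      proof (intro ballI)
        fix q1 q2 assume q1: "q1 \<in> Qs s" and q2: "q2 \<in> Qs s"
        have c1: "cp q1 \<in> K \<inter> cball s \<epsilon>" using q1 cpin Pcsub unfolding Qs_def by blast
        have c2: "cp q2 \<in> K \<inter> cball s \<epsilon>" using q2 cpin Pcsub unfolding Qs_def by blast
        have "norm (cp q1 - cp q2) = dist (cp q1) (cp q2)" by (simp add: dist_norm)
        also have "\<dots> \<le> dist (cp q1) s + dist s (cp q2)" by (rule dist_triangle)
        also have "\<dots> \<le> \<epsilon> + \<epsilon>" using c1 c2 by (simp add: dist_commute)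
        finally have nb: "norm (cp q1 - cp q2) \<le> 2 * \<epsilon>" by simp
        have "\<bar>r x (cp q1) - r x (cp q2)\<bar> \<le> L * norm (cp q1 - cp q2)" using lip[OF x] c1 c2 by blast
        also have "\<dots> \<le> L * (2 * \<epsilon>)" using nb Lpos by (intro mult_left_mono) auto
        also have "\<dots> = 2 * a * \<sigma>" unfolding \<epsilon>_def using Lpos by simp
        finally show "\<bar>r x (cp q1) - r x (cp q2)\<bar> \<le> 2 * a * \<sigma>" .
      qed
      have u'0: "\<forall>q\<in>Qs s. u' q \<ge> 0" unfolding u'_def using c(3) by simp
      have w0': "\<forall>q\<in>Qs s. w q \<ge> 0" unfolding w_def by simp
      have Dge: "2 * nat \<lfloor>27 / 2 * a\<^sup>2\<rfloor> * \<zeta> \<le> D" unfolding D_def k_def by simp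
      from cell_bound[OF finQ w0' u'0 swu mom pdr Dge close \<sigma> a, of y]
      show ?thesis unfolding h_def E_def by simp
    qed
    have img: "cell ` PP \<subseteq> S" using cellS by blast
    have "(\<Sum>P\<in>PP. (w P - u' P) * h (cp P)) = (\<Sum>s\<in>S. \<Sum>q\<in>Qs s. (w q - u' q) * h (cp q))"
      unfolding Qs_def by (rule sum.group[OF finPP S(1) img, symmetric])
    then have "\<bar>\<Sum>P\<in>PP. (w P - u' P) * h (cp P)\<bar> \<le> (\<Sum>s\<in>S. \<bar>\<Sum>q\<in>Qs s. (w q - u' q) * h (cp q)\<bar>)"
      by (simp add: sum_abs)
    also have "\<dots> \<le> (\<Sum>s\<in>S. sum w (Qs s) * E)" by (rule sum_mono) (rule cellb)
    also have "\<dots> = (\<Sum>s\<in>S. sum w (Qs s)) * E" by (simp add: sum_distrib_right)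
    also have "(\<Sum>s\<in>S. sum w (Qs s)) = sum w PP"
      unfolding Qs_def by (rule sum.group[OF finPP S(1) img])
    finally have d2: "\<bar>\<Sum>P\<in>PP. (w P - u' P) * h (cp P)\<bar> \<le> E" using sw by simp
    have "(\<Sum>P\<in>PP. (w P - u' P) * h (cp P)) = (\<Sum>P\<in>PP. w P * h (cp P)) - (\<Sum>P\<in>PP. u' P * h (cp P))"
      by (simp add: left_diff_distrib sum_subtractf)
    then have "\<bar>mix_density r \<sigma> G x y - mix_density r \<sigma> (measure_pmf G') x y\<bar> \<le> \<delta> + E"
      using d1 d2 unfolding m1 m2 w_def by linarith
    also have "\<delta> + E = (1 + 1 / sqrt (2 * pi)) * exp (- a\<^sup>2 / 2) / (sqrt (2 * pi) * \<sigma>)"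
    proof -
      have gen: "e / (s * (s * \<sigma>)) + e / (s * \<sigma>) = (1 + 1 / s) * e / (s * \<sigma>)" if "s > 0" for s e :: real
        using that \<sigma> by (simp add: field_simps)
      show ?thesis unfolding \<delta>_def E_def by (rule gen) simp
    qed
    finally show "\<bar>mix_density r \<sigma> G x y - mix_density r \<sigma> (measure_pmf G') x y\<bar>
                \<le> (1 + 1 / sqrt (2 * pi)) * exp (- a\<^sup>2 / 2) / (sqrt (2 * pi) * \<sigma>)" .
  qed
  show ?thesis unfolding covN using finG' subK cardG' bound by blast
qed

end
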